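(* Fix a positive integer $m$. Then, as a function of $n$ (with $n\to\infty$), the domination number satisfies $\gamma(\mathcal{SR}(m,n))=\Theta(n^{m-2})$.
   Context: For positive integers $m,n$, the simplicial rook graph $\mathcal{SR}(m,n)$ is the graph whose vertices are the vectors $(a_1,\dots,a_m)\in\mathbb{N}^m$ (nonnegative integer coordinates) with $a_1+\cdots+a_m=n$, two vertices being adjacent if and only if their vectors differ in exactly two coordinates. $\gamma(G)$ denotes the domination number of a graph $G$: the minimum size of a set $D$ of vertices such that every vertex is in $D$ or adjacent to a vertex of $D$. *)

theory Defs
  imports Complex_Main "HOL-Library.Landau_Symbols"
begin

text \<open>Vertices of the simplicial rook graph SR(m,n): vectors (a_0,...,a_(m-1)) of
  naturals with sum n, encoded as functions nat => nat vanishing outside {..<m}.\<close>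
definition SR_verts :: "nat \<Rightarrow> nat \<Rightarrow> (nat \<Rightarrow> nat) set" where
  "SR_verts m n = {a. (\<forall>i\<ge>m. a i = 0) \<and> (\<Sum>i<m. a i) = n}"

definition SR_adj :: "nat \<Rightarrow> (nat \<Rightarrow> nat) \<Rightarrow> (nat \<Rightarrow> nat) \<Rightarrow> bool" where
  "SR_adj m a b \<longleftrightarrow> card {i\<in>{..<m}. a i \<noteq> b i} = 2"

definition dominating_set :: "'a set \<Rightarrow> ('a \<Rightarrow> 'a \<Rightarrow> bool) \<Rightarrow> 'a set \<Rightarrow> bool" where
  "dominating_set V E D \<longleftrightarrow> D \<subseteq> V \<and> (\<forall>v\<in>V. v \<in> D \<or> (\<exists>d\<in>D. E d v))"

definition domination_number :: "'a set \<Rightarrow> ('a \<Rightarrow> 'a \<Rightarrow> bool) \<Rightarrow> nat" where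
  "domination_number V E = (LEAST k. \<exists>D. finite D \<and> dominating_set V E D \<and> card D = k)"

definition SR_gamma :: "nat \<Rightarrow> nat \<Rightarrow> nat" where
  "SR_gamma m n = domination_number (SR_verts m n) (SR_adj m)"

end

theory Submission
  imports Defs "HOL-Library.FuncSet"
begin

lemma SR_le: "a \<in> SR_verts m n \<Longrightarrow> a i \<le> n"
proof -
  assume a: "a \<in> SR_verts m n"
  show ?thesis
  proof (cases "i < m")
    case True
    have "a i \<le> (\<Sum>j<m. a j)" by (rule member_le_sum) (use True in auto)
    then show ?thesis using a by (simp add: SR_verts_def)
  next
    case False then show ?thesis using a by (simp add: SR_verts_def)
  qed
qed

lemma SR_finite: "finite (SR_verts m n)"
proof -
  have inj: "inj_on (\<lambda>a. restrict a {..<m}) (SR_verts m n)"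
  proof
    fix a b assume a: "a \<in> SR_verts m n" and b: "b \<in> SR_verts m n"
      and e: "restrict a {..<m} = restrict b {..<m}"
    show "a = b"
    proof
      fix i show "a i = b i"
      proof (cases "i < m")
        case True then show ?thesis using fun_cong[OF e, of i] by simp
      next
        case False then show ?thesis using a b by (simp add: SR_verts_def)
      qed
    qed
  qed
  have "(\<lambda>a. restrict a {..<m}) ` SR_verts m n \<subseteq> PiE {..<m} (\<lambda>_. {..n})"
    by (rule image_subsetI) (simp add: restrict_PiE_iff SR_le)
  then have "finite ((\<lambda>a. restrict a {..<m}) ` SR_verts m n)"
    by (rule finite_subset) (simp add: finite_PiE)
  then show ?thesis using finite_imageD inj by blast
qed

lemma gamma_le:
  assumes "finite D" "dominating_set V E D"
  shows "domination_number V E \<le> card D"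
  unfolding domination_number_def by (rule Least_le) (use assms in auto)

lemma gamma_attained:
  assumes "finite V"
  shows "\<exists>D. finite D \<and> dominating_set V E D \<and> card D = domination_number V E"
proof -
  have "\<exists>D. finite D \<and> dominating_set V E D \<and> card D = card V"
    using assms by (intro exI[of _ V]) (auto simp: dominating_set_def)
  then have "\<exists>k D. finite D \<and> dominating_set V E D \<and> card D = k" by blast
  then obtain k where "\<exists>D. finite D \<and> dominating_set V E D \<and> card D = k" by blast
  from LeastI[of "\<lambda>k. \<exists>D. finite D \<and> dominating_set V E D \<and> card D = k", OF this]
  show ?thesis unfolding domination_number_def by blast
qed

lemma dom_count:
  assumes "finite V" "dominating_set V E D" "finite D"
    and K: "\<And>d. d \<in> D \<Longrightarrow> card {v\<in>V. E d v} \<le> K"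
  shows "card V \<le> card D * (K + 1)"
proof -
  have "V \<subseteq> (\<Union>d\<in>D. insert d {v\<in>V. E d v})"
    using assms(2) by (auto simp: dominating_set_def)
  then have "card V \<le> card (\<Union>d\<in>D. insert d {v\<in>V. E d v})"
    by (rule card_mono[rotated]) (use assms in auto)
  also have "\<dots> \<le> (\<Sum>d\<in>D. card (insert d {v\<in>V. E d v}))"
    by (rule card_UN_le) (use assms in auto)
  also have "\<dots> \<le> (\<Sum>d\<in>D. K + 1)"
  proof (rule sum_mono)
    fix d assume d: "d \<in> D"
    have "card (insert d {v\<in>V. E d v}) \<le> Suc (card {v\<in>V. E d v})"
      using assms(1) by (simp add: card_insert_if)
    then show "card (insert d {v\<in>V. E d v}) \<le> K + 1" using K[OF d] by simp
  qed
  finally show ?thesis by simp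
qed

lemma nbhd_bound:
  assumes d: "d \<in> SR_verts m n"
  shows "card {v\<in>SR_verts m n. SR_adj m d v} \<le> m * m * (n + 1)"
proof -
  let ?f = "\<lambda>(i, j, x). d(i := x, j := d i + d j - x)"
  have sub: "{v\<in>SR_verts m n. SR_adj m d v} \<subseteq> ?f ` ({..<m} \<times> {..<m} \<times> {..n})"
  proof
    fix v assume v: "v \<in> {v\<in>SR_verts m n. SR_adj m d v}"
    then have vV: "v \<in> SR_verts m n" and c: "card {i\<in>{..<m}. d i \<noteq> v i} = 2"
      by (auto simp: SR_adj_def)
    from c obtain i j where ij: "i \<noteq> j" and S: "{i\<in>{..<m}. d i \<noteq> v i} = {i, j}"
      unfolding card_2_iff by blast
    have "i \<in> {i\<in>{..<m}. d i \<noteq> v i}" "j \<in> {i\<in>{..<m}. d i \<noteq> v i}"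
      unfolding S by simp_all
    then have im: "i < m" and jm: "j < m" by simp_all
    have out: "d k = v k" if "k < m" "k \<noteq> i" "k \<noteq> j" for k
    proof -
      have "k \<notin> {i\<in>{..<m}. d i \<noteq> v i}" unfolding S using that by simp
      then show ?thesis using that by simp
    qed
    have veq: "v = d(i := v i, j := v j)"
    proof
      fix k show "v k = (d(i := v i, j := v j)) k"
      proof (cases "k = i \<or> k = j")
        case True then show ?thesis by auto
      next
        case False
        show ?thesis
        proof (cases "k < m")
          case True then show ?thesis using False out[of k] by simp
        next
          case False2: False
          then show ?thesis using False d vV by (simp add: SR_verts_def)
        qed
      qed
    qed
    have sub2: "{i, j} \<subseteq> {..<m}" using im jm by auto
    have "sum v {..<m} = sum v ({..<m} - {i, j}) + sum v {i, j}"
      by (rule sum.subset_diff[OF sub2]) simp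
    moreover have "sum d {..<m} = sum d ({..<m} - {i, j}) + sum d {i, j}"
      by (rule sum.subset_diff[OF sub2]) simp
    moreover have "sum v ({..<m} - {i, j}) = sum d ({..<m} - {i, j})"
    proof (rule sum.cong[OF refl])
      fix x assume "x \<in> {..<m} - {i, j}"
      then show "v x = d x" using out[of x] by simp
    qed
    moreover have "sum v {..<m} = sum d {..<m}" using d vV by (simp add: SR_verts_def)
    ultimately have "v i + v j = d i + d j" using ij by simp
    then have "v j = d i + d j - v i" by simp
    then have "v = ?f (i, j, v i)" using veq by simp
    moreover have "(i, j, v i) \<in> {..<m} \<times> {..<m} \<times> {..n}"
      by (simp add: im jm SR_le[OF vV])
    ultimately show "v \<in> ?f ` ({..<m} \<times> {..<m} \<times> {..n})" by blast
  qed
  have "card {v\<in>SR_verts m n. SR_adj m d v} \<le> card (?f ` ({..<m} \<times> {..<m} \<times> {..n}))"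
    by (rule card_mono[OF _ sub]) simp
  also have "\<dots> \<le> card ({..<m} \<times> {..<m} \<times> {..n})" by (rule card_image_le) simp
  also have "\<dots> = m * m * (n + 1)" by (simp add: card_cartesian_product algebra_simps)
  finally show ?thesis .
qed

lemma lower_count:
  "card (SR_verts (Suc (Suc k)) n) \<ge> (n div Suc k + 1) ^ Suc k"
proof -
  let ?P = "PiE {..<Suc k} (\<lambda>_. {..n div Suc k})"
  let ?g = "\<lambda>f i. if i < Suc k then f i else if i = Suc k then n - sum f {..<Suc k} else (0::nat)"
  have inj: "inj_on ?g ?P"
  proof
    fix f h assume f: "f \<in> ?P" and h: "h \<in> ?P" and e: "?g f = ?g h"
    show "f = h"
    proof (rule PiE_ext[OF f h])
      fix i assume "i \<in> {..<Suc k}"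
      then show "f i = h i" using fun_cong[OF e, of i] by simp
    qed
  qed
  have img: "?g ` ?P \<subseteq> SR_verts (Suc (Suc k)) n"
  proof
    fix a assume "a \<in> ?g ` ?P"
    then obtain f where f: "f \<in> ?P" and a: "a = ?g f" by blast
    have "sum f {..<Suc k} \<le> (\<Sum>i<Suc k. n div Suc k)"
      by (rule sum_mono) (use f in auto)
    also have "\<dots> = Suc k * (n div Suc k)" by simp
    also have "\<dots> \<le> n" by (metis div_times_less_eq_dividend mult.commute)
    finally have le: "sum f {..<Suc k} \<le> n" .
    have "(\<Sum>i<Suc k. a i) = sum f {..<Suc k}" unfolding a by (rule sum.cong) auto
    then have "(\<Sum>i<Suc (Suc k). a i) = n" using le by (simp add: a)
    then show "a \<in> SR_verts (Suc (Suc k)) n" by (simp add: SR_verts_def a)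
  qed
  have "card ?P \<le> card (SR_verts (Suc (Suc k)) n)"
    by (rule card_inj_on_le[OF inj img SR_finite])
  moreover have "card ?P = (n div Suc k + 1) ^ Suc k" by (simp add: card_PiE)
  ultimately show ?thesis by simp
qed

lemma upper_dom:
  "\<exists>D. finite D \<and> dominating_set (SR_verts (Suc (Suc k)) n) (SR_adj (Suc (Suc k))) D
      \<and> card D \<le> (n + 1) ^ k"
proof -
  let ?m = "Suc (Suc k)"
  let ?V = "SR_verts ?m n"
  define D where "D = {a\<in>?V. a k = 0}"
  have fin: "finite D" unfolding D_def using SR_finite by simp
  have dom: "dominating_set ?V (SR_adj ?m) D"
    unfolding dominating_set_def
  proof (intro conjI ballI)
    show "D \<subseteq> ?V" unfolding D_def by auto
  next
    fix a assume a: "a \<in> ?V"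
    define b where "b = a(k := 0, Suc k := a k + a (Suc k))"
    have "(\<Sum>i<k. b i) = (\<Sum>i<k. a i)" unfolding b_def by (rule sum.cong) auto
    then have "(\<Sum>i<?m. b i) = (\<Sum>i<?m. a i)" by (simp add: b_def)
    then have bV: "b \<in> ?V" using a by (simp add: SR_verts_def b_def)
    then have bD: "b \<in> D" by (simp add: D_def b_def)
    show "a \<in> D \<or> (\<exists>d\<in>D. SR_adj ?m d a)"
    proof (cases "a k = 0")
      case True then show ?thesis using a by (simp add: D_def)
    next
      case False
      have "{i\<in>{..<?m}. b i \<noteq> a i} = {k, Suc k}"
        using False by (auto simp: b_def)
      then have "SR_adj ?m b a" by (simp add: SR_adj_def)
      then show ?thesis using bD by blast
    qed
  qed
  have inj: "inj_on (\<lambda>a. restrict a {..<k}) D"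
  proof
    fix a b assume a: "a \<in> D" and b: "b \<in> D"
      and e: "restrict a {..<k} = restrict b {..<k}"
    have lt: "\<And>i. i < k \<Longrightarrow> a i = b i" using e by (metis restrict_apply' lessThan_iff)
    have sk: "(\<Sum>i<k. a i) = (\<Sum>i<k. b i)" by (rule sum.cong) (auto simp: lt)
    have "(\<Sum>i<k. a i) + a (Suc k) = n" "(\<Sum>i<k. b i) + b (Suc k) = n"
      using a b by (auto simp: D_def SR_verts_def)
    then have s: "a (Suc k) = b (Suc k)" using sk by simp
    show "a = b"
    proof
      fix i
      consider "i < k" | "i = k" | "i = Suc k" | "i \<ge> ?m" by linarith
      then show "a i = b i"
        by cases (use lt s a b in \<open>auto simp: D_def SR_verts_def\<close>)
    qed
  qed
  have "(\<lambda>a. restrict a {..<k}) ` D \<subseteq> PiE {..<k} (\<lambda>_. {..n})"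
    by (rule image_subsetI) (auto simp: restrict_PiE_iff D_def Pi_def intro: SR_le)
  then have "card D \<le> card (PiE {..<k} (\<lambda>_. {..n}))"
    by (rule card_inj_on_le[OF inj]) (simp add: finite_PiE)
  also have "\<dots> = (n + 1) ^ k" by (simp add: card_PiE)
  finally show ?thesis using fin dom by blast
qed

lemma gamma_one: "SR_gamma 1 n = 1"
proof -
  let ?V = "SR_verts 1 n"
  let ?e = "\<lambda>i::nat. if i = 0 then n else 0"
  have eV: "?e \<in> ?V" by (simp add: SR_verts_def)
  have uniq: "a = ?e" if "a \<in> ?V" for a
  proof
    fix i show "a i = ?e i" using that by (cases "i = 0") (auto simp: SR_verts_def)
  qed
  have Veq: "?V = {?e}" using eV uniq by blast
  have "SR_gamma 1 n \<le> card ?V" unfolding SR_gamma_def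
    by (rule gamma_le) (auto simp: SR_finite dominating_set_def)
  moreover have "card ?V = 1" using Veq by simp
  moreover have "SR_gamma 1 n \<ge> 1"
  proof -
    obtain D where D: "finite D" "dominating_set ?V (SR_adj 1) D" "card D = SR_gamma 1 n"
      using gamma_attained[OF SR_finite] unfolding SR_gamma_def by blast
    have "D \<noteq> {}" using D(2) eV by (auto simp: dominating_set_def)
    then show ?thesis using D by (metis card_0_eq less_one not_le)
  qed
  ultimately show ?thesis by linarith
qed

lemma gamma_bounds:
  fixes k n :: nat
  defines "m \<equiv> Suc (Suc k)"
  shows "SR_gamma m n \<le> (n + 1) ^ k"
    and "(n div Suc k + 1) ^ Suc k \<le> SR_gamma m n * (m * m * (n + 1) + 1)"
proof -
  obtain D where D: "finite D" "dominating_set (SR_verts m n) (SR_adj m) D" "card D \<le> (n + 1) ^ k"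
    using upper_dom[of k n] unfolding m_def by blast
  show "SR_gamma m n \<le> (n + 1) ^ k"
    using gamma_le[OF D(1,2)] D(3) unfolding SR_gamma_def by linarith
  obtain D' where D': "finite D'" "dominating_set (SR_verts m n) (SR_adj m) D'"
    "card D' = SR_gamma m n"
    using gamma_attained[OF SR_finite] unfolding SR_gamma_def by blast
  have "card (SR_verts m n) \<le> card D' * (m * m * (n + 1) + 1)"
    by (rule dom_count[OF SR_finite D'(2,1)]) (rule nbhd_bound, use D'(2) in \<open>auto simp: dominating_set_def\<close>)
  then show "(n div Suc k + 1) ^ Suc k \<le> SR_gamma m n * (m * m * (n + 1) + 1)"
    using lower_count[where k=k and n=n] D'(3) unfolding m_def using order_trans by metis
qed

theorem theorem2:
  fixes m :: nat
  assumes "m \<ge> 1"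
  shows "(\<lambda>n. real (SR_gamma m n)) \<in> \<Theta>(\<lambda>n. real n ^ (m - 2))"
proof (cases "m = 1")
  case True
  then have "(\<lambda>n. real (SR_gamma m n)) = (\<lambda>n. real n ^ (m - 2))"
    using gamma_one by simp
  then show ?thesis by simp
next
  case False
  then obtain k where mk: "m = Suc (Suc k)" using assms False by (intro that[of "m - 2"]) arith
  define c1 :: real where "c1 = 1 / (real (Suc k) ^ Suc k * (2 * real m * real m + 1))"
  define c2 :: real where "c2 = 2 ^ k"
  have c1: "c1 > 0"
  proof -
    have "0 \<le> 2 * real m * real m" by simp
    then have "0 < 2 * real m * real m + 1" by linarith
    then show ?thesis unfolding c1_def by simp
  qed
  have c2: "c2 > 0" unfolding c2_def by simp
  show ?thesis
  proof (rule bigthetaI'[OF c1 c2])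
    show "\<forall>\<^sub>F n in at_top. c1 * norm (real n ^ (m - 2)) \<le> norm (real (SR_gamma m n))
            \<and> norm (real (SR_gamma m n)) \<le> c2 * norm (real n ^ (m - 2))"
      unfolding eventually_at_top_linorder
    proof (intro exI[of _ 1] allI impI)
      fix n :: nat assume n1: "n \<ge> 1"
      have mk2: "m - 2 = k" using mk by simp
      let ?g = "real (SR_gamma m n)"
      have up: "?g \<le> c2 * real n ^ k"
      proof -
        have "?g \<le> real ((n + 1) ^ k)" using gamma_bounds(1)[where k=k and n=n] mk by (simp only: of_nat_le_iff)
        also have "\<dots> = (real n + 1) ^ k" by (simp add: add.commute)
        also have "\<dots> \<le> (2 * real n) ^ k" by (rule power_mono) (use n1 in auto)
        also have "\<dots> = c2 * real n ^ k" by (simp add: c2_def power_mult_distrib)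
        finally show ?thesis .
      qed
      have lo: "c1 * real n ^ k \<le> ?g"
      proof -
        let ?K = "real m * real m * (real n + 1) + 1"
        have A: "real ((n div Suc k + 1) ^ Suc k) \<le> real (SR_gamma m n * (m * m * (n + 1) + 1))"
          using gamma_bounds(2)[where k=k and n=n] mk by (simp only: of_nat_le_iff)
        have B: "real n / real (Suc k) \<le> real (n div Suc k + 1)"
        proof -
          have "real n = real (n div Suc k * Suc k + n mod Suc k)" by (simp only: div_mult_mod_eq)
          also have "\<dots> \<le> real ((n div Suc k + 1) * Suc k)"
            using mod_less_divisor[of "Suc k" n] by (simp only: of_nat_le_iff) simp
          finally show ?thesis by (simp add: field_simps)
        qed
        have "(real n / real (Suc k)) ^ Suc k \<le> real (n div Suc k + 1) ^ Suc k"
          by (rule power_mono[OF B]) simp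
        also have "\<dots> \<le> ?g * ?K" using A by (simp only: of_nat_mult of_nat_add of_nat_power of_nat_1)
        also have "\<dots> \<le> ?g * ((2 * real m * real m + 1) * real n)"
        proof (rule mult_left_mono)
          have "real m * real m * (real n + 1) \<le> real m * real m * (2 * real n)"
            by (rule mult_left_mono) (use n1 in auto)
          then show "?K \<le> (2 * real m * real m + 1) * real n" using n1 by (simp add: algebra_simps)
        qed simp
        finally have C: "(real n / real (Suc k)) ^ Suc k \<le> ?g * ((2 * real m * real m + 1) * real n)" .
        have "(real n / real (Suc k)) ^ Suc k = real n * real n ^ k / real (Suc k) ^ Suc k"
          by (simp add: power_divide)
        then have "real n * (real n ^ k) \<le> real n * (?g * (real (Suc k) ^ Suc k * (2 * real m * real m + 1)))"
          using C by (simp add: field_simps del: of_nat_Suc)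
        then have "real n ^ k \<le> ?g * (real (Suc k) ^ Suc k * (2 * real m * real m + 1))"
          using n1 by simp
        then show ?thesis unfolding c1_def by (simp add: field_simps add_pos_nonneg del: of_nat_Suc)
      qed
      show "c1 * norm (real n ^ (m - 2)) \<le> norm ?g \<and> norm ?g \<le> c2 * norm (real n ^ (m - 2))"
        using up lo by (simp add: mk2)
    qed
  qed
qed

end
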